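(* Let $a_{\inf},a_{\sup},b_{\inf},b_{\sup},\chi,\mu$ be positive constants with $a_{\inf}\le a_{\sup}$, $b_{\inf}\le b_{\sup}$, and suppose $b_{\inf}>\big(1+\frac{a_{\sup}}{a_{\inf}}\big)\chi\mu$. Define sequences by $\underline{M}_0=0$ and, for $n\ge0$, $$\overline{M}_n=\frac{a_{\sup}-\chi\mu\underline{M}_n}{b_{\inf}-\chi\mu},\qquad \underline{M}_{n+1}=\frac{a_{\inf}-\chi\mu\overline{M}_n}{b_{\sup}-\chi\mu}.$$ Then for every $n\ge0$, $\underline{M}_{n+1}>\underline{M}_n\ge0$ and $\overline{M}_n>\overline{M}_{n+1}>0$, and $\lim_{n\to\infty}(\underline{M}_n,\overline{M}_n)=(\underline{M},\overline{M})$, where $$\underline{M}:=\frac{(b_{\inf}-\chi\mu)a_{\inf}-\chi\mu a_{\sup}}{(b_{\sup}-\chi\mu)(b_{\inf}-\chi\mu)-(\chi\mu)^2},\qquad \overline{M}:=\frac{(b_{\sup}-\chi\mu)a_{\sup}-\chi\mu a_{\inf}}{(b_{\sup}-\chi\mu)(b_{\inf}-\chi\mu)-(\chi\mu)^2}.$$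
   Context: In the paper, $a_{\inf},a_{\sup}$ (resp. $b_{\inf},b_{\sup}$) are the infimum and supremum over $(x,t)\in\mathbb{R}^N\times\mathbb{R}$ of positive bounded functions $a(x,t)$ (resp. $b(x,t)$). *)

theory Defs
  imports "HOL-Analysis.Analysis"
begin

fun M_low :: "real \<Rightarrow> real \<Rightarrow> real \<Rightarrow> real \<Rightarrow> real \<Rightarrow> real \<Rightarrow> nat \<Rightarrow> real" where
  "M_low ainf asup binf bsup chi mu 0 = 0"
| "M_low ainf asup binf bsup chi mu (Suc n) =
     (ainf - chi * mu * ((asup - chi * mu * M_low ainf asup binf bsup chi mu n) / (binf - chi * mu)))
       / (bsup - chi * mu)"

definition M_up :: "real \<Rightarrow> real \<Rightarrow> real \<Rightarrow> real \<Rightarrow> real \<Rightarrow> real \<Rightarrow> nat \<Rightarrow> real" where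
  "M_up ainf asup binf bsup chi mu n =
     (asup - chi * mu * M_low ainf asup binf bsup chi mu n) / (binf - chi * mu)"

end

theory Submission
  imports Defs
begin

theorem lemma3p4:
  fixes ainf asup binf bsup chi mu :: real
  assumes "ainf > 0" "asup > 0" "binf > 0" "bsup > 0" "chi > 0" "mu > 0"
    and "ainf \<le> asup" "binf \<le> bsup"
    and "binf > (1 + asup / ainf) * chi * mu"
  shows "(\<forall>n. M_low ainf asup binf bsup chi mu (Suc n) > M_low ainf asup binf bsup chi mu n
              \<and> M_low ainf asup binf bsup chi mu n \<ge> 0
              \<and> M_up ainf asup binf bsup chi mu n > M_up ainf asup binf bsup chi mu (Suc n)
              \<and> M_up ainf asup binf bsup chi mu (Suc n) > 0)
       \<and> ((\<lambda>n. (M_low ainf asup binf bsup chi mu n, M_up ainf asup binf bsup chi mu n))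
            \<longlonglongrightarrow>
            (((binf - chi*mu) * ainf - chi*mu*asup) / ((bsup - chi*mu) * (binf - chi*mu) - (chi*mu)^2),
             ((bsup - chi*mu) * asup - chi*mu*ainf) / ((bsup - chi*mu) * (binf - chi*mu) - (chi*mu)^2)))"
proof -
  define c where "c = chi * mu"
  define A where "A = binf - c"
  define B where "B = bsup - c"
  define L where "L = M_low ainf asup binf bsup chi mu"
  define U where "U = M_up ainf asup binf bsup chi mu"
  define D where "D = B * A - c^2"
  define Ls where "Ls = (A * ainf - c * asup) / D"
  define r where "r = c^2 / (A * B)"
  have c0: "c > 0" using assms c_def by simp
  have h: "binf > c + asup * c / ainf" using assms(9) unfolding c_def
    by (simp add: algebra_simps)
  have "asup * c / ainf \<ge> c" using assms c0 by (simp add: field_simps)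
  hence Ac: "A > c" using h A_def by simp
  have Bc: "B \<ge> A" using A_def B_def assms by simp
  have A0: "A > 0" and B0: "B > 0" using Ac Bc c0 by auto
  have "c * c < A * B" using Ac Bc c0 by (smt (verit) mult_strict_mono)
  hence D0: "D > 0" unfolding D_def by (simp add: power2_eq_square algebra_simps)
  have "asup * c / ainf * ainf < (A) * ainf" using h A_def assms(1)
    by (intro mult_strict_right_mono) auto
  hence num: "A * ainf - c * asup > 0" using assms(1) by (simp add: algebra_simps)
  have Ls0: "Ls > 0" using num D0 Ls_def by simp
  have r0: "r \<ge> 0" and r1: "r < 1" using \<open>c*c < A*B\<close> A0 B0 r_def
    by (auto simp: power2_eq_square)
  have rpos: "r > 0" using c0 A0 B0 r_def by simp
  have rec: "L (Suc n) = (ainf - c * ((asup - c * L n) / A)) / B" for n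
    by (simp add: L_def A_def B_def c_def)
  have Ueq: "U n = (asup - c * L n) / A" for n
    by (simp add: U_def M_up_def L_def A_def c_def)
  have closed: "L n = Ls - Ls * r ^ n" for n
  proof (induction n)
    case 0 then show ?case by (simp add: L_def)
  next
    case (Suc n)
    have fx: "(ainf - c * ((asup - c * (Ls - Ls * x)) / A)) / B = Ls - Ls * (r * x)" for x
      using A0 B0 D0 unfolding Ls_def r_def
      by (simp add: field_simps power2_eq_square) (simp add: D_def algebra_simps power2_eq_square)
    have "L (Suc n) = (ainf - c * ((asup - c * (Ls - Ls * r ^ n)) / A)) / B"
      using rec Suc by simp
    also have "\<dots> = Ls - Ls * r ^ Suc n" using fx[of "r^n"] by simp
    finally show ?case .
  qed
  have Llt: "L n < Ls" for n using closed[of n] Ls0 rpos by simp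
  have mono: "L n < L (Suc n)" for n
  proof -
    have "r ^ Suc n < r ^ n" using rpos r1 by (simp add: power_strict_decreasing)
    thus ?thesis using closed Ls0 by simp
  qed
  have Lge: "L n \<ge> 0" for n using closed[of n] Ls0 r0 r1
    by (simp add: power_le_one mult_le_cancel_left1)
  have Udec: "U n > U (Suc n)" for n using mono[of n] Ueq A0 c0
    by (simp add: divide_strict_right_mono)
  have Us: "(asup - c * Ls) / A = (B * asup - c * ainf) / D"
    using A0 D0 unfolding Ls_def by (simp add: field_simps power2_eq_square) (simp add: D_def algebra_simps power2_eq_square)
  have Usp: "(B * asup - c * ainf) / D > 0"
  proof -
    have "c * ainf < B * ainf" using Ac Bc assms(1) by simp
    also have "\<dots> \<le> B * asup" using B0 assms(7) by simp
    finally have "c * ainf < B * asup" .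
    thus ?thesis using D0 by simp
  qed
  have Upos: "U (Suc n) > 0" for n
  proof -
    have "(asup - c * Ls) / A < (asup - c * L (Suc n)) / A"
      using Llt[of "Suc n"] c0 A0 by (simp add: divide_strict_right_mono)
    thus ?thesis using Us Usp Ueq by simp
  qed
  have rn: "(\<lambda>n. r ^ n) \<longlonglongrightarrow> 0" using r0 r1 by (simp add: LIMSEQ_power_zero)
  have Llim: "L \<longlonglongrightarrow> Ls"
  proof -
    have "(\<lambda>n. Ls - Ls * r ^ n) \<longlonglongrightarrow> Ls - Ls * 0"
      by (intro tendsto_intros rn)
    moreover have "L = (\<lambda>n. Ls - Ls * r ^ n)" using closed by (simp add: fun_eq_iff)
    ultimately show ?thesis by simp
  qed
  have Ulim: "U \<longlonglongrightarrow> (asup - c * Ls) / A"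
  proof -
    have "(\<lambda>n. (asup - c * L n) / A) \<longlonglongrightarrow> (asup - c * Ls) / A"
      using A0 by (intro tendsto_intros Llim) simp
    moreover have "U = (\<lambda>n. (asup - c * L n) / A)" using Ueq by (simp add: fun_eq_iff)
    ultimately show ?thesis by simp
  qed
  have "(\<lambda>n. (L n, U n)) \<longlonglongrightarrow> (Ls, (B * asup - c * ainf) / D)"
    using tendsto_Pair[OF Llim Ulim] Us by simp
  thus ?thesis using mono Lge Udec Upos
    unfolding L_def U_def Ls_def D_def A_def B_def c_def by simp
qed

end
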